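(* Consider the queueing system in the context under MaxWeight with a diagonal matrix $\Delta$ with positive diagonal entries, in overload ($\rho\notin\mathcal{P}$). Let $H=\limsup_{t\to\infty}\langle \frac{X(t)}{t},\Delta\frac{X(t)}{t}\rangle$ and let $\eta$ be the limit of $X(t_c)/t_c$ along an increasing unbounded sequence $\{t_c\}$ with $\langle\eta,\Delta\eta\rangle=H$. Then for every $\epsilon\in(0,1)$, $$-\Big[\langle\rho,\Delta\eta\rangle-\max_{S\in\mathcal{S}}\langle S,\Delta\eta\rangle\Big]\frac{\epsilon}{1-\epsilon}+\langle\eta,\Delta\eta\rangle\frac{1}{1-\epsilon}\ge\langle\eta,\Delta\eta\rangle.$$
   Context: Model: $Q$ queues, finite set $\mathcal{S}=\{S_1,\dots,S_N\}\subset\mathbb{R}^Q_{\ge0}$, discrete time. Arrivals $A(t)$ with $0\le A_q(t)\le\bar A_q<\infty$ and $\rho_q=\lim_{t\to\infty}\frac1t\sum_{s=0}^{t-1}A_q(s)\in(0,\infty)$. Departures $D_q(t)=\min\{S_q(t),X_q(t)\}$, $X(t+1)=X(t)+A(t)-D(t)$, $X(0)=0$, with $S(t)\in\arg\max_{S\in\mathcal{S}}\langle S,\Delta X(t)\rangle$. Stability region $\mathcal{P}=\{r\in\mathbb{R}^Q_{\ge0}: r\le\sum_n\alpha_nS_n\text{ for some }\alpha_n\ge0,\sum_n\alpha_n=1\}$. *)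

theory Defs
  imports "HOL-Analysis.Analysis"
begin

text \<open>Vectors in R^Q are functions from a finite index type 'q of queues to real.
  The diagonal matrix Delta is represented by its diagonal d.\<close>

definition ip :: "('q::finite \<Rightarrow> real) \<Rightarrow> ('q \<Rightarrow> real) \<Rightarrow> real" where
  "ip x y = (\<Sum>q\<in>UNIV. x q * y q)"

definition diagm :: "('q::finite \<Rightarrow> real) \<Rightarrow> ('q \<Rightarrow> real) \<Rightarrow> ('q \<Rightarrow> real)" where
  "diagm d x = (\<lambda>q. d q * x q)"

definition stab_region :: "('q::finite \<Rightarrow> real) set \<Rightarrow> ('q \<Rightarrow> real) set" where
  "stab_region Ss = {r. (\<forall>q. 0 \<le> r q) \<and>
     (\<exists>\<alpha>. (\<forall>S\<in>Ss. 0 \<le> \<alpha> S) \<and> (\<Sum>S\<in>Ss. \<alpha> S) = 1 \<and>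
          (\<forall>q. r q \<le> (\<Sum>S\<in>Ss. \<alpha> S * S q)))}"

definition maxweight_system ::
  "('q::finite \<Rightarrow> real) set \<Rightarrow> ('q \<Rightarrow> real) \<Rightarrow> (nat \<Rightarrow> 'q \<Rightarrow> real) \<Rightarrow> ('q \<Rightarrow> real)
   \<Rightarrow> ('q \<Rightarrow> real) \<Rightarrow> (nat \<Rightarrow> 'q \<Rightarrow> real) \<Rightarrow> (nat \<Rightarrow> 'q \<Rightarrow> real) \<Rightarrow> bool" where
  "maxweight_system Ss d A Abar \<rho> S X \<longleftrightarrow>
     finite Ss \<and> Ss \<noteq> {} \<and> (\<forall>s\<in>Ss. \<forall>q. 0 \<le> s q) \<and>
     (\<forall>t q. 0 \<le> A t q \<and> A t q \<le> Abar q) \<and>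
     (\<forall>q. ((\<lambda>t. (\<Sum>s<t. A s q) / real t) \<longlonglongrightarrow> \<rho> q) \<and> 0 < \<rho> q) \<and>
     X 0 = (\<lambda>q. 0) \<and>
     (\<forall>t. S t \<in> Ss \<and> (\<forall>s\<in>Ss. ip s (diagm d (X t)) \<le> ip (S t) (diagm d (X t)))) \<and>
     (\<forall>t q. X (Suc t) q = X t q + A t q - min (S t q) (X t q))"

end

theory Submission
  imports Defs
begin

lemma X_nonneg:
  assumes sys: "maxweight_system Ss d A Abar \<rho> S X"
  shows "0 \<le> X t q"
proof (induction t)
  case 0 then show ?case using sys by (simp add: maxweight_system_def)
next
  case (Suc t)
  have "X (Suc t) q = X t q + A t q - min (S t q) (X t q)" and "0 \<le> A t q"
    using sys by (auto simp: maxweight_system_def)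
  then show ?case by linarith
qed

lemma X_shift:
  assumes sys: "maxweight_system Ss d A Abar \<rho> S X"
  shows "X (m+n) q = X m q + (\<Sum>u\<in>{m..<m+n}. A u q - min (S u q) (X u q))"
proof (induction n)
  case 0 then show ?case by simp
next
  case (Suc n)
  have "X (Suc (m+n)) q = X (m+n) q + A (m+n) q - min (S (m+n) q) (X (m+n) q)"
    using sys by (auto simp: maxweight_system_def)
  then show ?case using Suc by simp
qed

lemma sum_split_lt:
  fixes f :: "nat \<Rightarrow> real"
  assumes "m \<le> n" shows "(\<Sum>u\<in>{m..<n}. f u) = (\<Sum>u<n. f u) - (\<Sum>u<m. f u)"
  using assms by (metis add_diff_cancel_left' atLeast0LessThan sum.atLeastLessThan_concat zero_le)

lemma final_alg:
  fixes R M H \<epsilon> :: real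
  assumes "R - M \<le> H" "0 < \<epsilon>" "\<epsilon> < 1"
  shows "- (R - M) * (\<epsilon> / (1 - \<epsilon>)) + H * (1 / (1 - \<epsilon>)) \<ge> H"
proof -
  have "(R - M) * \<epsilon> \<le> H * \<epsilon>" using assms by (intro mult_right_mono) auto
  then have "- (R - M) * \<epsilon> + H \<ge> H * (1 - \<epsilon>)" by (simp add: algebra_simps)
  moreover have "- (R - M) * (\<epsilon> / (1 - \<epsilon>)) + H * (1 / (1 - \<epsilon>)) = (-(R-M)*\<epsilon> + H)/(1-\<epsilon>)"
    by (simp add: add_divide_distrib)
  ultimately show ?thesis using assms by (simp add: pos_le_divide_eq)
qed

lemma eps_conclude:
  fixes R M H :: real
  assumes H: "0 \<le> H" and c: "\<And>e \<delta>. 0 < e \<Longrightarrow> 0 < \<delta> \<Longrightarrow> H + 2*e*(R - M) \<le> (1+e)^2*(H+\<delta>)"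
  shows "R - M \<le> H"
proof -
  have 1: "H + 2*e*(R - M) \<le> (1+e)^2*H" if e: "0 < e" for e
  proof (rule field_le_epsilon)
    fix x :: real assume x: "0 < x"
    have p: "0 < (1+e)^2" using e by simp
    have "H + 2*e*(R - M) \<le> (1+e)^2*(H + x/(1+e)^2)" using c[OF e] x p by simp
    also have "\<dots> = (1+e)^2*H + x" using p by (simp add: field_simps)
    finally show "H + 2*e*(R - M) \<le> (1+e)^2*H + x" .
  qed
  show ?thesis
  proof (rule field_le_epsilon)
    fix x :: real assume x: "0 < x"
    define e where "e = 2*x/(H+1)"
    have e: "0 < e" using x H by (simp add: e_def)
    have "2*e*(R-M) \<le> 2*e*H + e*e*H" using 1[OF e] by (simp add: power2_eq_square algebra_simps)
    hence "2*e*(R-M) \<le> 2*e*(H + e*H/2)" by (simp add: algebra_simps)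
    hence "R - M \<le> H + e*H/2" using e by simp
    moreover have "e*H/2 \<le> x" using x H by (simp add: e_def field_simps)
    ultimately show "R - M \<le> H + x" by linarith
  qed
qed

lemma core:
  fixes Ss :: "('q::finite \<Rightarrow> real) set"
    and d Abar \<rho> \<eta> :: "'q \<Rightarrow> real"
    and A S X :: "nat \<Rightarrow> 'q \<Rightarrow> real"
    and T :: "nat \<Rightarrow> nat"
  assumes sys: "maxweight_system Ss d A Abar \<rho> S X"
    and dpos: "\<forall>q. 0 < d q"
    and tc_mono: "strict_mono T"
    and eta_lim: "\<forall>q. ((\<lambda>c. X (T c) q / real (T c)) \<longlonglongrightarrow> \<eta> q)"
    and eta_H: "ereal (ip \<eta> (diagm d \<eta>)) =
                limsup (\<lambda>t. ereal (ip (\<lambda>q. X t q / real t) (diagm d (\<lambda>q. X t q / real t))))"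
    and e: "0 < e" and dl: "0 < \<delta>"
  shows "ip \<eta> (diagm d \<eta>) + 2*e*(ip \<rho> (diagm d \<eta>) - (MAX s\<in>Ss. ip s (diagm d \<eta>)))
           \<le> (1+e)^2*(ip \<eta> (diagm d \<eta>)+\<delta>)"
proof -
  define H where "H = ip \<eta> (diagm d \<eta>)"
  define R where "R = ip \<rho> (diagm d \<eta>)"
  define M where "M = (MAX s\<in>Ss. ip s (diagm d \<eta>))"
  have fin: "finite Ss" and ne: "Ss \<noteq> {}" and Sin: "\<And>t. S t \<in> Ss"
    and Anon: "\<And>t q. 0 \<le> A t q"
    and rholim: "\<And>q. ((\<lambda>t. (\<Sum>s<t. A s q) / real t) \<longlonglongrightarrow> \<rho> q)"
    using sys by (auto simp: maxweight_system_def)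
  define K where "K c = nat \<lfloor>e * real (T c)\<rfloor>" for c
  define T' where "T' c = T c + K c" for c
  have Tpos: "eventually (\<lambda>c. 0 < T c) sequentially"
  proof -
    have "\<forall>c\<ge>1. 0 < T c" using seq_suble[OF tc_mono] by (metis less_le_trans zero_less_one le_trans less_one not_le)
    then show ?thesis unfolding eventually_sequentially by blast
  qed
  have K_le: "real (K c) \<le> e * real (T c)" for c
    using e by (simp add: K_def)
  have K_ge: "e * real (T c) - 1 \<le> real (K c)" for c
  proof -
    have "0 \<le> \<lfloor>e * real (T c)\<rfloor>" using e by simp
    then have "real (K c) = of_int \<lfloor>e * real (T c)\<rfloor>" by (simp add: K_def)
    then show ?thesis by linarith
  qed
  have Kmono: "K c \<le> K (Suc c)" for c
  proof -
    have "T c \<le> T (Suc c)" using tc_mono by (simp add: strict_mono_less_eq)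
    then have "e * real (T c) \<le> e * real (T (Suc c))" using e by simp
    then show ?thesis unfolding K_def by (intro nat_mono floor_mono)
  qed
  have T'mono: "strict_mono T'"
    unfolding strict_mono_Suc_iff T'_def using tc_mono Kmono
    by (metis add_less_le_mono strict_mono_Suc_iff)
  have invT: "(\<lambda>c. 1 / real (T c)) \<longlonglongrightarrow> 0"
    using LIMSEQ_subseq_LIMSEQ[OF lim_inverse_n' tc_mono] by (simp add: o_def)
  have Kratio: "(\<lambda>c. real (K c) / real (T c)) \<longlonglongrightarrow> e"
  proof (rule tendsto_sandwich[where f="\<lambda>c. e - 1 / real (T c)" and h="\<lambda>c. e"])
    show "\<forall>\<^sub>F c in sequentially. e - 1 / real (T c) \<le> real (K c) / real (T c)"
      using Tpos
    proof eventually_elim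
      case (elim c)
      have "e - 1 / real (T c) = (e * real (T c) - 1) / real (T c)" using elim by (simp add: field_simps)
      also have "\<dots> \<le> real (K c) / real (T c)" using K_ge[of c] elim by (intro divide_right_mono) auto
      finally show ?case .
    qed
    show "\<forall>\<^sub>F c in sequentially. real (K c) / real (T c) \<le> e"
      using Tpos
    proof eventually_elim
      case (elim c)
      then show ?case using K_le[of c] by (simp add: divide_le_eq mult.commute)
    qed
    show "(\<lambda>c. e - 1 / real (T c)) \<longlonglongrightarrow> e" using tendsto_diff[OF tendsto_const invT] by simp
  qed simp
  have ratio: "(\<lambda>c. real (T' c) / real (T c)) \<longlonglongrightarrow> 1 + e"
  proof (rule Lim_transform_eventually)
    show "(\<lambda>c. 1 + real (K c) / real (T c)) \<longlonglongrightarrow> 1 + e" using tendsto_add[OF tendsto_const Kratio] .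
    show "\<forall>\<^sub>F c in sequentially. 1 + real (K c) / real (T c) = real (T' c) / real (T c)"
      using Tpos by eventually_elim (simp add: T'_def field_simps)
  qed
  define arr where "arr c q = (\<Sum>u\<in>{T c..<T' c}. A u q) / real (T c)" for c q
  define dep where "dep c q = (\<Sum>u\<in>{T c..<T' c}. min (S u q) (X u q)) / real (T c)" for c q
  have arrlim: "(\<lambda>c. arr c q) \<longlonglongrightarrow> e * \<rho> q" for q
  proof (rule Lim_transform_eventually)
    have a1: "(\<lambda>c. (\<Sum>s<T' c. A s q) / real (T' c)) \<longlonglongrightarrow> \<rho> q"
      using LIMSEQ_subseq_LIMSEQ[OF rholim T'mono] by (simp add: o_def)
    have a2: "(\<lambda>c. (\<Sum>s<T c. A s q) / real (T c)) \<longlonglongrightarrow> \<rho> q"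
      using LIMSEQ_subseq_LIMSEQ[OF rholim tc_mono] by (simp add: o_def)
    show "(\<lambda>c. (\<Sum>s<T' c. A s q) / real (T' c) * (real (T' c) / real (T c)) - (\<Sum>s<T c. A s q) / real (T c))
        \<longlonglongrightarrow> e * \<rho> q"
      using tendsto_diff[OF tendsto_mult[OF a1 ratio] a2] by (simp add: algebra_simps)
    show "\<forall>\<^sub>F c in sequentially. (\<Sum>s<T' c. A s q) / real (T' c) * (real (T' c) / real (T c)) - (\<Sum>s<T c. A s q) / real (T c) = arr c q"
      using Tpos
    proof eventually_elim
      case (elim c)
      have "0 < T' c" using elim by (simp add: T'_def)
      then have "(\<Sum>s<T' c. A s q) / real (T' c) * (real (T' c) / real (T c)) = (\<Sum>s<T' c. A s q) / real (T c)"
        by simp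
      then show ?case unfolding arr_def
        by (simp add: sum_split_lt T'_def diff_divide_distrib)
    qed
  qed
  have etanon: "0 \<le> \<eta> q" for q
  proof (rule LIMSEQ_le_const[OF eta_lim[rule_format]])
    show "\<exists>N. \<forall>n\<ge>N. 0 \<le> X (T n) q / real (T n)" using X_nonneg[OF sys] by auto
  qed
  have Hnn: "0 \<le> H" unfolding H_def ip_def diagm_def
    using dpos by (intro sum_nonneg) (metis less_imp_le mult.left_commute mult_nonneg_nonneg zero_le_square)
  define Wf where "Wf t = (\<Sum>q\<in>UNIV. X t q / real t * (d q * (X t q / real t)))" for t
  have upper: "eventually (\<lambda>c. Wf (T' c) < H + \<delta>) sequentially"
  proof -
    have "limsup (\<lambda>t. ereal (ip (\<lambda>q. X t q / real t) (diagm d (\<lambda>q. X t q / real t)))) < ereal (H + \<delta>)"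
      unfolding eta_H[symmetric] H_def using dl by simp
    from Limsup_lessD[OF this] have "eventually (\<lambda>t. Wf t < H + \<delta>) sequentially"
      by (simp add: Wf_def ip_def diagm_def)
    from eventually_subseq[OF T'mono this] show ?thesis .
  qed
  define g where "g c = H + 2 * ((\<Sum>q\<in>UNIV. d q * \<eta> q * (X (T c) q / real (T c) - \<eta> q))
      + (\<Sum>q\<in>UNIV. d q * \<eta> q * arr c q) - real (K c) / real (T c) * M)" for c
  have glim: "g \<longlonglongrightarrow> H + 2 * e * (R - M)"
  proof -
    have l1: "(\<lambda>c. \<Sum>q\<in>UNIV. d q * \<eta> q * (X (T c) q / real (T c) - \<eta> q)) \<longlonglongrightarrow> (\<Sum>q\<in>UNIV. d q * \<eta> q * 0)"
      by (intro tendsto_sum tendsto_mult tendsto_const) (use eta_lim in \<open>metis LIM_zero\<close>)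
    have l2: "(\<lambda>c. \<Sum>q\<in>UNIV. d q * \<eta> q * arr c q) \<longlonglongrightarrow> (\<Sum>q\<in>UNIV. d q * \<eta> q * (e * \<rho> q))"
      by (intro tendsto_sum tendsto_mult tendsto_const arrlim)
    have eq: "(\<Sum>q\<in>UNIV. d q * \<eta> q * (e * \<rho> q)) = e * R"
      unfolding R_def ip_def diagm_def by (simp add: sum_distrib_left algebra_simps)
    have "g \<longlonglongrightarrow> H + 2 * ((\<Sum>q\<in>UNIV. d q * \<eta> q * 0) + (\<Sum>q\<in>UNIV. d q * \<eta> q * (e * \<rho> q)) - e * M)"
      unfolding g_def by (intro tendsto_intros l1 l2 Kratio)
    then show ?thesis using eq by (simp add: algebra_simps)
  qed
  have hlim: "(\<lambda>c. (real (T' c) / real (T c))^2 * (H + \<delta>)) \<longlonglongrightarrow> (1+e)^2 * (H + \<delta>)"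
    by (intro tendsto_intros ratio)
  have bound: "eventually (\<lambda>c. g c \<le> (real (T' c) / real (T c))^2 * (H + \<delta>)) sequentially"
    using Tpos upper
  proof eventually_elim
    case (elim c)
    define Z where "Z q = X (T' c) q / real (T c)" for q
    have T'pos: "0 < T' c" using elim by (simp add: T'_def)
    have Zeq: "Z q - \<eta> q = (X (T c) q / real (T c) - \<eta> q) + arr c q - dep c q" for q
    proof -
      have "X (T' c) q = X (T c) q + (\<Sum>u\<in>{T c..<T' c}. A u q - min (S u q) (X u q))"
        using X_shift[OF sys, of "T c" "K c" q] by (simp add: T'_def)
      then show ?thesis unfolding Z_def arr_def dep_def
        by (simp add: sum_subtractf diff_divide_distrib add_divide_distrib)
    qed
    have depb: "(\<Sum>q\<in>UNIV. d q * \<eta> q * dep c q) \<le> real (K c) / real (T c) * M"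
    proof -
      have "(\<Sum>q\<in>UNIV. d q * \<eta> q * dep c q)
          = (\<Sum>u\<in>{T c..<T' c}. \<Sum>q\<in>UNIV. d q * \<eta> q * min (S u q) (X u q)) / real (T c)"
        unfolding dep_def by (simp add: sum_divide_distrib sum_distrib_left sum.swap[of _ "{T c..<T' c}"] algebra_simps)
      also have "\<dots> \<le> (\<Sum>u\<in>{T c..<T' c}. M) / real (T c)"
      proof (intro divide_right_mono sum_mono)
        fix u
        have "(\<Sum>q\<in>UNIV. d q * \<eta> q * min (S u q) (X u q)) \<le> (\<Sum>q\<in>UNIV. S u q * (d q * \<eta> q))"
        proof (intro sum_mono)
          fix q
          have "0 \<le> d q * \<eta> q" using dpos etanon[of q] by (simp add: less_imp_le)
          then show "d q * \<eta> q * min (S u q) (X u q) \<le> S u q * (d q * \<eta> q)"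
            by (metis min.cobounded1 mult.commute mult_left_mono)
        qed
        also have "\<dots> = ip (S u) (diagm d \<eta>)" by (simp add: ip_def diagm_def)
        also have "\<dots> \<le> M" unfolding M_def using fin Sin[of u] by (intro Max_ge) auto
        finally show "(\<Sum>q\<in>UNIV. d q * \<eta> q * min (S u q) (X u q)) \<le> M" .
      qed simp
      also have "\<dots> = real (K c) / real (T c) * M" by (simp add: T'_def)
      finally show ?thesis .
    qed
    have "g c \<le> H + 2 * (\<Sum>q\<in>UNIV. d q * \<eta> q * (Z q - \<eta> q))"
    proof -
      have "(\<Sum>q\<in>UNIV. d q * \<eta> q * (Z q - \<eta> q)) = (\<Sum>q\<in>UNIV. d q * \<eta> q * (X (T c) q / real (T c) - \<eta> q))
          + (\<Sum>q\<in>UNIV. d q * \<eta> q * arr c q) - (\<Sum>q\<in>UNIV. d q * \<eta> q * dep c q)"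
        unfolding Zeq by (simp add: algebra_simps sum.distrib sum_subtractf)
      then show ?thesis unfolding g_def using depb
        by (smt (verit))
    qed
    also have "\<dots> \<le> (\<Sum>q\<in>UNIV. Z q * (d q * Z q))"
    proof -
      have "H + 2 * (\<Sum>q\<in>UNIV. d q * \<eta> q * (Z q - \<eta> q)) = (\<Sum>q\<in>UNIV. \<eta> q * (d q * \<eta> q) + 2 * (d q * \<eta> q * (Z q - \<eta> q)))"
        unfolding H_def ip_def diagm_def by (simp add: sum.distrib sum_distrib_left)
      also have "\<dots> \<le> (\<Sum>q\<in>UNIV. Z q * (d q * Z q))"
      proof (intro sum_mono)
        fix q
        have "0 \<le> d q * (Z q - \<eta> q)^2" using dpos by (simp add: less_imp_le)
        then show "\<eta> q * (d q * \<eta> q) + 2 * (d q * \<eta> q * (Z q - \<eta> q)) \<le> Z q * (d q * Z q)"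
          by (simp add: power2_eq_square algebra_simps)
      qed
      finally show ?thesis .
    qed
    also have "\<dots> = (real (T' c) / real (T c))^2 * Wf (T' c)"
      unfolding Wf_def Z_def using T'pos elim
      by (simp add: sum_distrib_left power2_eq_square field_simps)
    also have "\<dots> \<le> (real (T' c) / real (T c))^2 * (H + \<delta>)"
      using elim by (intro mult_left_mono) auto
    finally show ?case .
  qed
  have "H + 2 * e * (R - M) \<le> (1+e)^2 * (H + \<delta>)"
    using tendsto_le[OF trivial_limit_sequentially hlim glim bound] .
  then show ?thesis by (simp add: H_def R_def M_def)
qed

theorem lemma6:
  fixes Ss :: "('q::finite \<Rightarrow> real) set"
    and d Abar \<rho> \<eta> :: "'q \<Rightarrow> real"
    and A S X :: "nat \<Rightarrow> 'q \<Rightarrow> real"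
    and tc :: "nat \<Rightarrow> nat"
    and \<epsilon> :: real
  assumes sys: "maxweight_system Ss d A Abar \<rho> S X"
    and dpos: "\<forall>q. 0 < d q"
    and overload: "\<rho> \<notin> stab_region Ss"
    and tc_mono: "strict_mono tc"
    and eta_lim: "\<forall>q. ((\<lambda>c. X (tc c) q / real (tc c)) \<longlonglongrightarrow> \<eta> q)"
    and eta_H: "ereal (ip \<eta> (diagm d \<eta>)) =
                limsup (\<lambda>t. ereal (ip (\<lambda>q. X t q / real t) (diagm d (\<lambda>q. X t q / real t))))"
    and eps: "0 < \<epsilon>" "\<epsilon> < 1"
  shows "- (ip \<rho> (diagm d \<eta>) - (MAX s\<in>Ss. ip s (diagm d \<eta>))) * (\<epsilon> / (1 - \<epsilon>))
           + ip \<eta> (diagm d \<eta>) * (1 / (1 - \<epsilon>)) \<ge> ip \<eta> (diagm d \<eta>)"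
proof (rule final_alg[OF _ eps])
  show "ip \<rho> (diagm d \<eta>) - (MAX s\<in>Ss. ip s (diagm d \<eta>)) \<le> ip \<eta> (diagm d \<eta>)"
  proof (rule eps_conclude)
  have etanon: "0 \<le> \<eta> q" for q
  proof (rule LIMSEQ_le_const[OF eta_lim[rule_format]])
    show "\<exists>N. \<forall>n\<ge>N. 0 \<le> X (tc n) q / real (tc n)" using X_nonneg[OF sys] by auto
  qed
  show "0 \<le> ip \<eta> (diagm d \<eta>)" unfolding ip_def diagm_def
    using dpos by (intro sum_nonneg) (metis less_imp_le mult.left_commute mult_nonneg_nonneg zero_le_square)
  show "ip \<eta> (diagm d \<eta>) + 2 * e * (ip \<rho> (diagm d \<eta>) - (MAX s\<in>Ss. ip s (diagm d \<eta>)))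
         \<le> (1 + e)\<^sup>2 * (ip \<eta> (diagm d \<eta>) + \<delta>)" if "0 < e" "0 < \<delta>" for e \<delta>
    using core[OF sys dpos tc_mono eta_lim eta_H that] .
  qed
qed

end
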